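(* Let $n\ge 1$, $a<b$, and let $f:[a,b]\to\mathbb{R}$ be $n$-times differentiable on $[a,b]$. Put $\mathfrak{T}_f(a)=T_{n-1}(f,b)(a)-f(a)$. If $$\left(\frac{f^{(n)}(a)(a-b)^n}{n!}+\mathfrak{T}_f(a)\right)\left(\frac{f^{(n)}(b)(a-b)^n}{n!}+\mathfrak{T}_f(a)\right)\geq 0,$$ then there exists $\eta\in(a,b]$ such that $$\frac{f(\eta)-f(a)}{\eta-a}=\sum_{i=1}^n\frac{(-1)^{i+1}}{i!}(\eta-a)^{i-1}f^{(i)}(\eta).$$
   Context: $n$-times differentiable on $[a,b]$ means $n$-times differentiable on $(a,b)$ with the corresponding one-sided derivatives existing at the endpoints. $T_m(h,x_0)(x)=\sum_{k=0}^m \frac{h^{(k)}(x_0)}{k!}(x-x_0)^k$ denotes the $m$-th Taylor polynomial of $h$ at $x_0$, evaluated at $x$. *)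

theory Defs
  imports Complex_Main
begin

text \<open>m-th Taylor polynomial of h (given by its derivative family D, D k = h^(k))
  at x0, evaluated at x.\<close>
definition taylor_poly :: "(nat \<Rightarrow> real \<Rightarrow> real) \<Rightarrow> nat \<Rightarrow> real \<Rightarrow> real \<Rightarrow> real" where
  "taylor_poly D m x0 x = (\<Sum>k\<le>m. D k x0 / fact k * (x - x0) ^ k)"

end

theory Submission
  imports Defs
begin


lemma rolle_f:
  fixes f :: "real \<Rightarrow> real"
  assumes "a < b" "f a = f b" "continuous_on {a..b} f"
    "\<And>x. a < x \<Longrightarrow> x < b \<Longrightarrow> (f has_real_derivative f' x) (at x)"
  shows "\<exists>z. a < z \<and> z < b \<and> f' z = 0"
proof -
  obtain z where z: "a < z" "z < b" "(\<lambda>v. f' z * v) = (\<lambda>v. 0)"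
    using Rolle_deriv[OF assms(1,2,3), of "\<lambda>x v. f' x * v"] assms(4)
    by (auto simp: has_field_derivative_def)
  from fun_cong[OF z(3), of 1] z(1,2) show ?thesis by auto
qed

lemma mvt_f:
  fixes f :: "real \<Rightarrow> real"
  assumes "a < b" "continuous_on {a..b} f"
    "\<And>x. a < x \<Longrightarrow> x < b \<Longrightarrow> (f has_real_derivative f' x) (at x)"
  shows "\<exists>z. a < z \<and> z < b \<and> f b - f a = f' z * (b - a)"
proof -
  obtain z where "a < z" "z < b" "f b - f a = (\<lambda>v. f' z * v) (b - a)"
    using mvt[OF assms(1,2), of "\<lambda>x v. f' x * v"] assms(3)
    by (auto simp: has_field_derivative_def)
  thus ?thesis by auto
qed

lemma A0:
  fixes H V :: "real \<Rightarrow> real"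
  assumes ab: "a < b" and cont: "continuous_on {a..b} H" and Ha: "H a = 0"
    and dI: "\<And>x. a < x \<Longrightarrow> x < b \<Longrightarrow> (H has_real_derivative V x) (at x)"
    and dB: "(H has_real_derivative V b) (at b within {a..b})"
    and s: "H b * V b \<le> 0" and Hb: "H b \<ge> 0"
  shows "\<exists>c. a < c \<and> c \<le> b \<and> V c = 0"
proof (cases "V b = 0")
  case True then show ?thesis using ab by auto
next
  case False
  show ?thesis
  proof (cases "H b = 0")
    case True
    then obtain z where "a < z" "z < b" "V z = 0"
      using rolle_f[OF ab _ cont dI] Ha by auto
    then show ?thesis by auto
  next
    case False2: False
    with Hb have Hbp: "H b > 0" by auto
    with s False have Vn: "V b < 0"
      by (smt (verit) mult_pos_pos)
    obtain d where d: "d > 0" "\<forall>h>0. b - h \<in> {a..b} \<longrightarrow> h < d \<longrightarrow> H b < H (b - h)"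
      using has_real_derivative_neg_dec_left[OF dB Vn] by blast
    define h where "h = min (d/2) ((b-a)/2)"
    have h1: "h \<le> (b-a)/2" "h > 0" "h < d" using d ab unfolding h_def by (auto simp: min_def)
    have h: "h > 0" "h < d" "b - h \<in> {a..b}" "b - h > a"
      using h1 ab by auto
    define x0 where "x0 = b - h"
    have x0: "a < x0" "x0 < b" "H b < H x0" using h d unfolding x0_def by auto
    have "continuous_on {a..x0} H" using cont x0 by (auto elim: continuous_on_subset)
    then obtain y where y: "a \<le> y" "y \<le> x0" "H y = H b"
      using IVT'[of H a "H b" x0] Ha Hb x0 by auto
    have ya: "a < y" using y Ha Hbp by (cases "y = a") auto
    have "continuous_on {y..b} H" using cont ya by (auto elim: continuous_on_subset)
    then obtain z where "y < z" "z < b" "V z = 0"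
      using rolle_f[of y b H V] y x0 ya dI by auto
    then show ?thesis using ya by (intro exI[of _ z]) auto
  qed
qed

lemma A:
  fixes H V :: "real \<Rightarrow> real"
  assumes ab: "a < b" and cont: "continuous_on {a..b} H" and Ha: "H a = 0"
    and dI: "\<And>x. a < x \<Longrightarrow> x < b \<Longrightarrow> (H has_real_derivative V x) (at x)"
    and dB: "(H has_real_derivative V b) (at b within {a..b})"
    and s: "H b * V b \<le> 0"
  shows "\<exists>c. a < c \<and> c \<le> b \<and> V c = 0"
proof (cases "H b \<ge> 0")
  case True then show ?thesis using A0[OF assms] by blast
next
  case False
  have "\<exists>c. a < c \<and> c \<le> b \<and> - V c = 0"
    apply (rule A0[of a b "\<lambda>x. - H x" "\<lambda>x. - V x"])
    using assms False by (auto intro!: continuous_intros derivative_intros)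
  then show ?thesis by auto
qed



lemma tele:
  fixes E :: "nat \<Rightarrow> real \<Rightarrow> real"
  assumes "\<forall>m<Suc k. \<forall>t\<in>S. (E m has_real_derivative E (Suc m) t) (at t within S)" "t \<in> S"
  shows "((\<lambda>x. \<Sum>i<Suc k. E i x * (a-x)^i / fact i) has_real_derivative E (Suc k) t * (a-t)^k / fact k) (at t within S)"
  using assms(1)
proof (induction k)
  case 0
  then show ?case using assms(2) by simp
next
  case (Suc k)
  have d1: "((\<lambda>x. \<Sum>i<Suc k. E i x * (a-x)^i / fact i) has_real_derivative E (Suc k) t * (a-t)^k / fact k) (at t within S)"
    using Suc by auto
  have d2: "(E (Suc k) has_real_derivative E (Suc (Suc k)) t) (at t within S)"
    using Suc.prems assms(2) by auto
  have "((\<lambda>x. (\<Sum>i<Suc k. E i x * (a-x)^i / fact i) + E (Suc k) x * (a-x)^(Suc k) / fact (Suc k)) has_real_derivative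
     E (Suc k) t * (a-t)^k / fact k + (E (Suc (Suc k)) t * (a-t)^(Suc k) + E (Suc k) t * (real (Suc k) * (a-t)^k * (0 - 1))) / fact (Suc k)) (at t within S)"
  proof -
    have d3: "((\<lambda>x. E (Suc k) x * (a-x)^(Suc k) / fact (Suc k)) has_real_derivative
      (E (Suc (Suc k)) t * (a-t)^(Suc k) + E (Suc k) t * (real (Suc k) * (a-t)^k * (0 - 1))) / fact (Suc k)) (at t within S)"
      by (intro derivative_eq_intros d2) (auto intro: d2)
    show ?thesis using DERIV_add[OF d1 d3] by simp
  qed
  moreover have "E (Suc k) t * (a-t)^k / fact k + (E (Suc (Suc k)) t * (a-t)^(Suc k) + E (Suc k) t * (real (Suc k) * (a-t)^k * (0 - 1))) / fact (Suc k)
     = E (Suc (Suc k)) t * (a-t)^(Suc k) / fact (Suc k)"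
  proof -
    have fk: "fact k > (0::real)" by simp
    have aux: "\<And>A B p q (F::real). F > 0 \<Longrightarrow> A*p/F + (B*(q*p) + A*(real (Suc k)*p*(0-1)))/(real (Suc k)*F) = B*(q*p)/(real (Suc k)*F)"
    proof -
      fix A B p q F :: real assume F: "F > 0"
      have nz: "real (Suc k)*F \<noteq> 0" "F \<noteq> 0" using F by auto
      show "A*p/F + (B*(q*p) + A*(real (Suc k)*p*(0-1)))/(real (Suc k)*F) = B*(q*p)/(real (Suc k)*F)"
        using nz by (simp add: divide_simps)
    qed
    show ?thesis using aux[OF fk] by (simp only: fact_Suc power_Suc of_nat_mult)
  qed
  ultimately show ?case by simp
qed



definition Pn :: "(nat \<Rightarrow> real) \<Rightarrow> nat \<Rightarrow> real \<Rightarrow> nat \<Rightarrow> real \<Rightarrow> real" where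
  "Pn c n a k x = (\<Sum>j\<le>n-k. c (k+j) * (x-a)^j / fact j)"

lemma Pn_deriv:
  assumes "k < n"
  shows "(Pn c n a k has_real_derivative Pn c n a (Suc k) x) (at x within S)"
proof -
  define N where "N = n - Suc k"
  have nk: "n - k = Suc N" using assms unfolding N_def by auto
  have eq: "Pn c n a k = (\<lambda>x. c k + (\<Sum>j\<le>N. c (Suc k + j) * (x-a)^(Suc j) / fact (Suc j)))"
    unfolding Pn_def nk by (rule ext, subst sum.atMost_Suc_shift) (simp del: fact_Suc)
  have eq2: "Pn c n a (Suc k) x = (\<Sum>j\<le>N. c (Suc k + j) * (x-a)^j / fact j)"
    unfolding Pn_def N_def by simp
  have "((\<lambda>x. c k + (\<Sum>j\<le>N. c (Suc k + j) * (x-a)^(Suc j) / fact (Suc j))) has_real_derivative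
        0 + (\<Sum>j\<le>N. c (Suc k + j) * (real (Suc j) * (x-a)^j * (1 - 0)) / fact (Suc j))) (at x within S)"
  proof -
    have tm: "((\<lambda>z. C * (z-a)^(Suc j) / F) has_real_derivative C * (real (Suc j) * (x-a)^j * (1 - 0)) / F) (at x within S)" for C F j
    proof -
      have "((\<lambda>z. C * (z-a)^(Suc j) / F) has_real_derivative C * (real (Suc j) * (x-a)^(Suc j - 1) * (1 - 0)) / F) (at x within S)"
      proof -
        have "((\<lambda>z. (z-a)) has_real_derivative 1-0) (at x within S)" by (intro DERIV_diff DERIV_ident DERIV_const)
        from DERIV_cdivide[OF DERIV_cmult[OF DERIV_power[OF this, of "Suc j"]], of C F] show ?thesis by simp
      qed
      then show ?thesis by simp
    qed
    show ?thesis by (intro DERIV_add DERIV_const DERIV_sum tm)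
  qed
  moreover have "(\<Sum>j\<le>N. c (Suc k + j) * (real (Suc j) * (x-a)^j * (1 - 0)) / fact (Suc j)) =
     (\<Sum>j\<le>N. c (Suc k + j) * (x-a)^j / fact j)"
    by (intro sum.cong refl) (simp add: field_simps del: of_nat_Suc)
  ultimately show ?thesis unfolding eq eq2 by simp
qed

lemma Pn_a: "k \<le> n \<Longrightarrow> Pn c n a k a = c k"
  unfolding Pn_def by (cases "n-k") (simp_all add: sum.atMost_Suc_shift)

lemma Pn_n: "Pn c n a n x = c n"
  unfolding Pn_def by simp

lemma Q:
  shows "(\<Sum>k<(Suc m). Pn c (Suc m) a k x * (a-x)^k / fact k) - c 0 = - c (Suc m) * (a-x)^(Suc m) / fact (Suc m)"
proof -
  define phi where "phi = (\<lambda>x. (\<Sum>k<(Suc m). Pn c (Suc m) a k x * (a-x)^k / fact k) - c 0 + c (Suc m) * (a-x)^(Suc m) / fact (Suc m))"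
  have "DERIV phi y :> 0" for y
  proof -
    have d1: "((\<lambda>x. \<Sum>k<Suc m. Pn c (Suc m) a k x * (a-x)^k / fact k) has_real_derivative Pn c (Suc m) a (Suc m) y * (a-y)^m / fact m) (at y)"
      by (rule tele) (auto intro: Pn_deriv)
    have d2: "((\<lambda>x. c (Suc m) * (a-x)^(Suc m) / fact (Suc m)) has_real_derivative c (Suc m) * (real (Suc m) * (a-y)^m * (0 - 1)) / fact (Suc m)) (at y)"
      by (intro derivative_eq_intros) auto
    have "(phi has_real_derivative Pn c (Suc m) a (Suc m) y * (a-y)^m / fact m - 0 + c (Suc m) * (real (Suc m) * (a-y)^m * (0 - 1)) / fact (Suc m)) (at y)"
      unfolding phi_def by (intro DERIV_add DERIV_diff d1 d2 DERIV_const)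
    moreover have "Pn c (Suc m) a (Suc m) y * (a-y)^m / fact m - 0 + c (Suc m) * (real (Suc m) * (a-y)^m * (0 - 1)) / fact (Suc m) = 0"
      using Pn_n[of c "Suc m" a y] by (simp add: field_simps del: of_nat_Suc)
    ultimately show ?thesis by metis
  qed
  then have "phi x = phi a" using DERIV_isconst_all[of phi] by blast
  moreover have "phi a = 0"
  proof -
    have "(\<Sum>k<(Suc m). Pn c (Suc m) a k a * (a-a)^k / fact k) = Pn c (Suc m) a 0 a"
      by (subst sum.lessThan_Suc_shift) simp
    then show ?thesis unfolding phi_def using Pn_a[of 0 "Suc m" c a] by simp
  qed
  ultimately show ?thesis unfolding phi_def by simp
qed



lemma Rderiv:
  assumes ab: "a < b" and diff: "\<forall>k<Suc m. \<forall>t\<in>{a..b}. (D k has_real_derivative D (Suc k) t) (at t within {a..b})"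
    and k: "k < Suc m" and t: "t \<in> {a..b}"
  shows "((\<lambda>x. D k x - Pn (\<lambda>i. D i a) (Suc m) a k x) has_real_derivative
           D (Suc k) t - Pn (\<lambda>i. D i a) (Suc m) a (Suc k) t) (at t within {a..b})"
  using diff k t by (intro DERIV_diff Pn_deriv) auto

lemma peano:
  assumes ab: "a < b" and diff: "\<forall>k<Suc m. \<forall>t\<in>{a..b}. (D k has_real_derivative D (Suc k) t) (at t within {a..b})"
  shows "j \<le> m \<Longrightarrow> \<forall>e>0. eventually (\<lambda>x. \<bar>D (m-j) x - Pn (\<lambda>i. D i a) (Suc m) a (m-j) x\<bar> \<le> e * (x-a)^(Suc j)) (at_right a)"
proof (induction j)
  case 0
  show ?case
  proof (intro allI impI)
    fix e :: real assume e: "e > 0"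
    have "(D m has_real_derivative D (Suc m) a) (at a within {a..b})" using diff ab by auto
    then have "((\<lambda>y. (D m y - D m a) / (y - a)) \<longlongrightarrow> D (Suc m) a) (at_right a)"
      unfolding has_field_derivative_iff at_within_Icc_at_right[OF ab] .
    from tendstoD[OF this e] have ev: "eventually (\<lambda>y. dist ((D m y - D m a) / (y - a)) (D (Suc m) a) < e) (at_right a)" .
    have Pm: "Pn (\<lambda>i. D i a) (Suc m) a m x = D m a + D (Suc m) a * (x - a)" for x
      unfolding Pn_def by (simp add: Suc_diff_le)
    show "eventually (\<lambda>x. \<bar>D (m-0) x - Pn (\<lambda>i. D i a) (Suc m) a (m-0) x\<bar> \<le> e * (x-a)^(Suc 0)) (at_right a)"
      using ev eventually_at_right_less[of a]
    proof (eventually_elim)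
      case (elim y)
      then have yp: "y - a > 0" by simp
      have "D m y - D m a - D (Suc m) a * (y - a) = ((D m y - D m a) / (y - a) - D (Suc m) a) * (y - a)"
        using yp by (simp add: field_simps)
      then have "\<bar>D m y - D m a - D (Suc m) a * (y - a)\<bar> = \<bar>(D m y - D m a) / (y - a) - D (Suc m) a\<bar> * (y - a)"
        using yp by (simp add: abs_mult)
      also have "\<dots> \<le> e * (y - a)" using elim(1) yp by (intro mult_right_mono) (auto simp: dist_real_def)
      finally show ?case using Pm[of y] by (simp add: algebra_simps)
    qed
  qed
next
  case (Suc j)
  define k where "k = m - Suc j"
  have k1: "Suc k = m - j" "k < Suc m" "Suc k < Suc m" using Suc.prems unfolding k_def by auto
  define R where "R = (\<lambda>k x. D k x - Pn (\<lambda>i. D i a) (Suc m) a k x)"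
  have IH: "\<forall>e>0. eventually (\<lambda>x. \<bar>R (Suc k) x\<bar> \<le> e * (x-a)^(Suc j)) (at_right a)"
    using Suc unfolding R_def k1(1) by auto
  have "\<forall>e>0. eventually (\<lambda>x. \<bar>R k x\<bar> \<le> e * (x-a)^(Suc (Suc j))) (at_right a)"
  proof (intro allI impI)
    fix e :: real assume e: "e > 0"
    obtain b' where b': "b' > a" "\<forall>y>a. y < b' \<longrightarrow> \<bar>R (Suc k) y\<bar> \<le> e * (y-a)^(Suc j)"
      using IH e unfolding eventually_at_right_field by blast
    have dR: "(R k has_real_derivative R (Suc k) t) (at t within {a..b})" if "t \<in> {a..b}" for t
      unfolding R_def by (rule Rderiv[OF ab diff k1(2) that])
    have Ra: "R k a = 0" unfolding R_def using Pn_a[of k "Suc m" "\<lambda>i. D i a" a] k1 by simp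
    show "eventually (\<lambda>x. \<bar>R k x\<bar> \<le> e * (x-a)^(Suc (Suc j))) (at_right a)"
      unfolding eventually_at_right_field
    proof (intro exI[of _ "min b b'"] conjI allI impI)
      show "min b b' > a" using ab b' by auto
      fix y assume y: "a < y" "y < min b b'"
      have cont: "continuous_on {a..y} (R k)"
        by (rule DERIV_continuous_on, rule DERIV_subset[OF dR]) (use y in auto)
      have dI: "(R k has_real_derivative R (Suc k) x) (at x)" if "a < x" "x < y" for x
      proof -
        have "(R k has_real_derivative R (Suc k) x) (at x within {a<..<b})"
          by (rule DERIV_subset[OF dR]) (use that y in auto)
        moreover have "at x within {a<..<b} = at x" by (rule at_within_open) (use that y in auto)
        ultimately show ?thesis by simp
      qed
      obtain z where z: "a < z" "z < y" "R k y - R k a = R (Suc k) z * (y - a)"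
        using mvt_f[OF y(1) cont dI] by blast
      have "\<bar>R (Suc k) z\<bar> \<le> e * (z-a)^(Suc j)" using b' z y by auto
      also have "\<dots> \<le> e * (y-a)^(Suc j)" using z e by (intro mult_left_mono power_mono) auto
      finally have "\<bar>R (Suc k) z\<bar> * (y - a) \<le> e * (y-a)^(Suc j) * (y - a)"
        using y by (intro mult_right_mono) auto
      moreover have "\<bar>R k y\<bar> = \<bar>R (Suc k) z\<bar> * (y - a)" using z(3) Ra y by (simp add: abs_mult)
      moreover have "e * (y-a)^(Suc j) * (y - a) = e * (y-a)^(Suc (Suc j))" by (simp only: power_Suc2 mult.assoc)
      ultimately show "\<bar>R k y\<bar> \<le> e * (y-a)^(Suc (Suc j))" by linarith
    qed
  qed
  then show ?case unfolding R_def k_def .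
qed


lemma alg:
  fixes y q p fm N Dn c G w :: real
  assumes "y \<noteq> 0" "q \<noteq> 0" "fm > 0" "N > 0" "w = -y"
  shows "((Dn*p/fm - 0 + c*(N*p*(0-1))/(N*fm))*(y*q) - (G + c*(w*p)/(N*fm))*(N*q*(1-0)))/((y*q)*(y*q))
     = -N*(G + Dn*(w*p)/(N*fm))/(y*(y*q))"
  using assms by (simp add: field_simps)

lemma fle: "z \<ge> 0 \<Longrightarrow> z / fact k \<le> (z::real)"
  using fact_ge_1[of k, where 'a=real] by (simp add: divide_le_eq mult_le_cancel_left1)
lemma alg2: "(x::real)/p * (-n*y/q) = -(n*(x*y)/(p*q))"
  by (simp add: times_divide_times_eq ac_simps)


lemma fin:
  fixes f :: "real \<Rightarrow> real" and D :: "nat \<Rightarrow> real \<Rightarrow> real"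
  assumes et: "\<eta> > a" and D0: "D 0 \<eta> = f \<eta>"
    and F0: "(\<Sum>k<Suc m. D k \<eta> * (a-\<eta>)^k / fact k) - f a + D (Suc m) \<eta> * (a-\<eta>)^(Suc m) / fact (Suc m) = 0"
  shows "(f \<eta> - f a) / (\<eta> - a) = (\<Sum>i=1..Suc m. (-1) ^ (i + 1) / fact i * (\<eta> - a) ^ (i - 1) * D i \<eta>)"
proof -
  define g where "g = (\<lambda>k. D k \<eta> * (a-\<eta>)^k / fact k)"
  have s1: "(\<Sum>k\<le>Suc m. g k) = f a" using F0 unfolding g_def
    by (simp add: lessThan_Suc_atMost[symmetric])
  have s2: "(\<Sum>k\<le>Suc m. g k) = f \<eta> + (\<Sum>i<Suc m. g (Suc i))"
    by (subst sum.atMost_Suc_shift) (simp add: g_def D0 lessThan_Suc_atMost)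
  have s3: "(\<Sum>i=1..Suc m. (-1) ^ (i + 1) / fact i * (\<eta> - a) ^ (i - 1) * D i \<eta>) * (\<eta> - a)
      = (\<Sum>i<Suc m. - g (Suc i))"
  proof -
    have "(\<Sum>i=1..Suc m. (-1) ^ (i + 1) / fact i * (\<eta> - a) ^ (i - 1) * D i \<eta>) =
          (\<Sum>i=0..m. (-1) ^ (Suc i + 1) / fact (Suc i) * (\<eta> - a) ^ (Suc i - 1) * D (Suc i) \<eta>)"
      using sum.shift_bounds_cl_Suc_ivl[of "\<lambda>i. (-1) ^ (i + 1) / fact i * (\<eta> - a) ^ (i - 1) * D i \<eta>" 0 m]
      by simp
    also have "\<dots> = (\<Sum>i<Suc m. (-1) ^ (Suc i + 1) / fact (Suc i) * (\<eta> - a) ^ i * D (Suc i) \<eta>)"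
      by (simp add: atLeast0AtMost lessThan_Suc_atMost)
    finally have calc: "(\<Sum>i=1..Suc m. (-1) ^ (i + 1) / fact i * (\<eta> - a) ^ (i - 1) * D i \<eta>) = (\<Sum>i<Suc m. (-1) ^ (Suc i + 1) / fact (Suc i) * (\<eta> - a) ^ i * D (Suc i) \<eta>)" .
    have e1: "(\<Sum>i=1..Suc m. (-1) ^ (i + 1) / fact i * (\<eta> - a) ^ (i - 1) * D i \<eta>) * (\<eta> - a) =
       (\<Sum>i<Suc m. (-1) ^ (Suc i + 1) / fact (Suc i) * (\<eta> - a) ^ i * D (Suc i) \<eta> * (\<eta> - a))"
      by (simp only: calc sum_distrib_right)
    have e2: "(-1) ^ (Suc i + 1) / fact (Suc i) * (\<eta> - a) ^ i * D (Suc i) \<eta> * (\<eta> - a) = - g (Suc i)" for i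
    proof -
      have h: "(a - \<eta>)^i = (-1)^i * (\<eta> - a)^i"
        by (metis minus_diff_eq power_minus)
      have fp: "fact i > (0::real)" by simp
      show ?thesis unfolding g_def power_Suc h fact_Suc using fp
        apply (simp add: field_simps) apply (simp only: minus_divide_left) by (rule arg_cong2[where f="(/)"]) (simp_all add: algebra_simps)
    qed
    show ?thesis unfolding e1 using e2 by simp
  qed
  have "(f \<eta> - f a) = (\<Sum>i=1..Suc m. (-1) ^ (i + 1) / fact i * (\<eta> - a) ^ (i - 1) * D i \<eta>) * (\<eta> - a)"
    unfolding s3 using s1 s2 by (simp add: sum_negf)
  then show ?thesis using et by (simp add: field_simps)
qed



lemma main_aux:
  fixes f :: "real \<Rightarrow> real" and D :: "nat \<Rightarrow> real \<Rightarrow> real" and a b :: real and m :: nat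
  assumes ab: "a < b"
    and D0: "\<forall>t\<in>{a..b}. D 0 t = f t"
    and diff: "\<forall>k<Suc m. \<forall>t\<in>{a..b}. (D k has_real_derivative D (Suc k) t) (at t within {a..b})"
    and hyp: "(D (Suc m) a * (a - b) ^ Suc m / fact (Suc m) + (taylor_poly D m b a - f a)) *
              (D (Suc m) b * (a - b) ^ Suc m / fact (Suc m) + (taylor_poly D m b a - f a)) \<ge> 0"
  shows "\<exists>\<eta>\<in>{a<..b}. (f \<eta> - f a) / (\<eta> - a) =
           (\<Sum>i=1..Suc m. (-1) ^ (i + 1) / fact i * (\<eta> - a) ^ (i - 1) * D i \<eta>)"
proof -
  define c where "c = (\<lambda>i. D i a)"
  define G where "G = (\<lambda>x. (\<Sum>k<Suc m. D k x * (a-x)^k / fact k) - f a)"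
  define K where "K = (\<lambda>x. G x + D (Suc m) a * (a-x)^(Suc m) / fact (Suc m))"
  define F where "F = (\<lambda>x. G x + D (Suc m) x * (a-x)^(Suc m) / fact (Suc m))"
  define H where "H = (\<lambda>x. K x / (x-a)^(Suc m))"
  define V where "V = (\<lambda>x. - real (Suc m) * F x / (x-a)^(Suc (Suc m)))"
  have fa: "f a = c 0" using D0 ab unfolding c_def by auto
  have tay: "taylor_poly D m b a - f a = G b"
    unfolding taylor_poly_def G_def lessThan_Suc_atMost by (simp add: field_simps)
  have hyp': "K b * F b \<ge> 0" using hyp unfolding tay K_def F_def by (simp add: add.commute)
  have Krep: "K x = (\<Sum>k<Suc m. (D k x - Pn c (Suc m) a k x) * (a-x)^k / fact k)" for x
  proof -
    have "(\<Sum>k<Suc m. (D k x - Pn c (Suc m) a k x) * (a-x)^k / fact k) =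
          (\<Sum>k<Suc m. D k x * (a-x)^k / fact k) - (\<Sum>k<Suc m. Pn c (Suc m) a k x * (a-x)^k / fact k)"
      by (simp add: sum_subtractf[symmetric] left_diff_distrib diff_divide_distrib)
    with Q[of c m a x] fa show ?thesis unfolding K_def G_def c_def by simp
  qed
  have Kbound: "eventually (\<lambda>x. \<bar>K x\<bar> \<le> e * (x-a)^(Suc m)) (at_right a)" if e: "e > 0" for e
  proof -
    define e' where "e' = e / real (Suc m)"
    have e': "e' > 0" using e unfolding e'_def by simp
    have "\<forall>k\<in>{..<Suc m}. eventually (\<lambda>x. \<bar>D k x - Pn c (Suc m) a k x\<bar> \<le> e' * (x-a)^(Suc m - k)) (at_right a)"
    proof
      fix k assume k: "k \<in> {..<Suc m}"
      have "m - (m - k) = k" "Suc (m - k) = Suc m - k" using k by auto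
      then show "eventually (\<lambda>x. \<bar>D k x - Pn c (Suc m) a k x\<bar> \<le> e' * (x-a)^(Suc m - k)) (at_right a)"
        using peano[OF ab diff, of "m - k"] e' unfolding c_def by auto
    qed
    from eventually_ball_finite[OF _ this] have ev: "eventually (\<lambda>x. \<forall>k\<in>{..<Suc m}. \<bar>D k x - Pn c (Suc m) a k x\<bar> \<le> e' * (x-a)^(Suc m - k)) (at_right a)"
      by simp
    show ?thesis using ev eventually_at_right_less[of a]
    proof eventually_elim
      case (elim x)
      have tb: "\<bar>(D k x - Pn c (Suc m) a k x) * (a-x)^k / fact k\<bar> \<le> e' * (x-a)^(Suc m)" if k: "k < Suc m" for k
      proof -
        have ax: "\<bar>(a-x)^k\<bar> = (x-a)^k" using elim(2) by (simp add: power_abs)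
        have "\<bar>(D k x - Pn c (Suc m) a k x) * (a-x)^k / fact k\<bar> = \<bar>D k x - Pn c (Suc m) a k x\<bar> * (x-a)^k / fact k"
          by (simp add: abs_mult ax)
        also have "\<dots> \<le> \<bar>D k x - Pn c (Suc m) a k x\<bar> * (x-a)^k"
          by (rule fle) (use elim(2) in simp)
        also have "\<dots> \<le> e' * (x-a)^(Suc m - k) * (x-a)^k"
          using elim(1) k elim(2) by (intro mult_right_mono) auto
        also have "\<dots> = e' * (x-a)^(Suc m)"
          using k by (simp add: mult.assoc power_add[symmetric])
        finally show ?thesis .
      qed
      have "\<bar>K x\<bar> \<le> (\<Sum>k<Suc m. \<bar>(D k x - Pn c (Suc m) a k x) * (a-x)^k / fact k\<bar>)"
        unfolding Krep by (rule sum_abs)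
      also have "\<dots> \<le> (\<Sum>k<Suc m. e' * (x-a)^(Suc m))"
        by (rule sum_mono) (use tb in auto)
      also have "\<dots> = e * (x-a)^(Suc m)" unfolding e'_def by simp
      finally show ?case .
    qed
  qed
  have dH: "(H has_real_derivative V t) (at t within {a..b})" if t: "a < t" "t \<le> b" for t
  proof -
    have tS: "t \<in> {a..b}" using t by auto
    have dG: "(G has_real_derivative D (Suc m) t * (a-t)^m / fact m - 0) (at t within {a..b})"
      unfolding G_def by (intro DERIV_diff tele[OF diff tS] DERIV_const)
    have d2: "((\<lambda>x. D (Suc m) a * (a-x)^(Suc m) / fact (Suc m)) has_real_derivative D (Suc m) a * (real (Suc m) * (a-t)^m * (0 - 1)) / fact (Suc m)) (at t within {a..b})"
      by (intro derivative_eq_intros) auto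
    have dK: "(K has_real_derivative (D (Suc m) t * (a-t)^m / fact m - 0) + D (Suc m) a * (real (Suc m) * (a-t)^m * (0 - 1)) / fact (Suc m)) (at t within {a..b})"
      unfolding K_def by (rule DERIV_add[OF dG d2])
    have dP: "((\<lambda>x. (x-a)^(Suc m)) has_real_derivative real (Suc m) * (t-a)^(Suc m - Suc 0) * (1 - 0)) (at t within {a..b})"
    proof -
      have "((\<lambda>x. x-a) has_real_derivative 1-0) (at t within {a..b})" by (intro DERIV_diff DERIV_ident DERIV_const)
      from DERIV_power[OF this, of "Suc m"] show ?thesis by simp
    qed
    have nz: "(t-a)^(Suc m) \<noteq> 0" using t by simp
    have "(H has_real_derivative (((D (Suc m) t * (a-t)^m / fact m - 0) + D (Suc m) a * (real (Suc m) * (a-t)^m * (0 - 1)) / fact (Suc m)) * (t-a)^(Suc m)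
        - K t * (real (Suc m) * (t-a)^(Suc m - Suc 0) * (1 - 0))) / ((t-a)^(Suc m) * (t-a)^(Suc m))) (at t within {a..b})"
      unfolding H_def by (rule DERIV_divide[OF dK dP nz])
    moreover have "(((D (Suc m) t * (a-t)^m / fact m - 0) + D (Suc m) a * (real (Suc m) * (a-t)^m * (0 - 1)) / fact (Suc m)) * (t-a)^(Suc m)
        - K t * (real (Suc m) * (t-a)^(Suc m - Suc 0) * (1 - 0))) / ((t-a)^(Suc m) * (t-a)^(Suc m)) = V t"
    proof -
      have "(t - a) \<noteq> 0" "(t-a)^m \<noteq> 0" "fact m > (0::real)" "real (Suc m) > 0" "a - t = - (t - a)" using t by auto
      from alg[OF this, of "D (Suc m) t" "(a-t)^m" "D (Suc m) a" "G t"]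
      show ?thesis unfolding V_def K_def F_def power_Suc fact_Suc by (simp add: mult.assoc)
    qed
    ultimately show ?thesis by simp
  qed
  have Ha: "H a = 0" unfolding H_def by simp
  have cont: "continuous_on {a..b} H"
    unfolding continuous_on_eq_continuous_within
  proof
    fix t assume t: "t \<in> {a..b}"
    show "continuous (at t within {a..b}) H"
    proof (cases "t = a")
      case False
      then show ?thesis using t dH[of t] by (auto intro: DERIV_continuous)
    next
      case True
      have "(H \<longlongrightarrow> 0) (at_right a)"
      proof (rule tendstoI)
        fix e :: real assume e: "e > 0"
        have he: "e/2 > 0" using e by simp
        show "eventually (\<lambda>x. dist (H x) 0 < e) (at_right a)"
          using Kbound[OF he] eventually_at_right_less[of a]
        proof eventually_elim
          case (elim x)
          have pos: "(x-a)^(Suc m) > 0" using elim by simp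
          have "\<bar>H x\<bar> = \<bar>K x\<bar> / (x-a)^(Suc m)" unfolding H_def using pos by (simp add: abs_divide)
          also have "\<dots> \<le> e/2" using elim(1) pos by (simp add: divide_le_eq)
          finally show ?case using e by simp
        qed
      qed
      then show ?thesis unfolding True continuous_within at_within_Icc_at_right[OF ab] Ha .
    qed
  qed
  have dI: "(H has_real_derivative V x) (at x)" if "a < x" "x < b" for x
  proof -
    have "(H has_real_derivative V x) (at x within {a<..<b})"
      by (rule DERIV_subset[OF dH]) (use that in auto)
    moreover have "at x within {a<..<b} = at x" by (rule at_within_open) (use that in auto)
    ultimately show ?thesis by simp
  qed
  have s: "H b * V b \<le> 0"
  proof -
    have pos: "(b-a)^(Suc m) > 0" "(b-a)^(Suc (Suc m)) > 0" using ab by auto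
    have "H b * V b = - (real (Suc m) * (K b * F b) / ((b-a)^(Suc m) * (b-a)^(Suc (Suc m))))"
      unfolding H_def V_def by (rule alg2)
    also have "\<dots> \<le> 0" using hyp' pos by (simp add: divide_nonneg_pos)
    finally show ?thesis .
  qed
  obtain \<eta> where et: "a < \<eta>" "\<eta> \<le> b" "V \<eta> = 0"
    using A[OF ab cont Ha dI dH[of b] s] ab by auto
  have "F \<eta> = 0" using et unfolding V_def by simp
  then have F0: "(\<Sum>k<Suc m. D k \<eta> * (a-\<eta>)^k / fact k) - f a + D (Suc m) \<eta> * (a-\<eta>)^(Suc m) / fact (Suc m) = 0"
    unfolding F_def G_def .
  have "D 0 \<eta> = f \<eta>" using D0 et by auto
  from fin[of a \<eta> D f m, OF et(1) this F0] et show ?thesis by auto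
qed


theorem mainTheorem14:
  fixes f :: "real \<Rightarrow> real" and D :: "nat \<Rightarrow> real \<Rightarrow> real" and a b :: real and n :: nat
  assumes n: "n \<ge> 1" and ab: "a < b"
    and D0: "\<forall>t\<in>{a..b}. D 0 t = f t"
    and diff: "\<forall>m<n. \<forall>t\<in>{a..b}. (D m has_real_derivative D (Suc m) t) (at t within {a..b})"
    and hyp: "(D n a * (a - b) ^ n / fact n + (taylor_poly D (n - 1) b a - f a)) *
              (D n b * (a - b) ^ n / fact n + (taylor_poly D (n - 1) b a - f a)) \<ge> 0"
  shows "\<exists>\<eta>\<in>{a<..b}. (f \<eta> - f a) / (\<eta> - a) =
           (\<Sum>i=1..n. (-1) ^ (i + 1) / fact i * (\<eta> - a) ^ (i - 1) * D i \<eta>)"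
proof -
  obtain m where m: "n = Suc m" using n by (cases n) auto
  show ?thesis using main_aux[of a b D f m] ab D0 diff hyp unfolding m by simp
qed

end
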